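(* For any binary classification task (finite dataset $S$ of $n$ labeled points, hypothesis class $H$ of finite VC dimension), the algorithm described in the context executes its main loop at most $\log_2(2n)$ times.
   Context: $D_S(h,h')=\frac1n\sum_{x\in S}\mathbb{I}(h(x)\ne h'(x))$, $B_H(h,r)=\{h'\in H:D_S(h,h')\le r\}$, $\mathrm{DIS}(V)=\{x\in S:\exists h_1,h_2\in V,h_1(x)\ne h_2(x)\}$, $\theta=\sup_{h\in H}\sup_{r>0}\frac{|\mathrm{DIS}(B_H(h,r))|}{rn}$, $V_H$ the VC dimension, $\mathrm{radius}(V)=\min\{r:\exists h'\in V,V\subseteq B_H(h',r)\}$. Classifiers are identified with their labelings of $S$. LB/UB: for a uniformly random subset $S''$ of size $m$ with queried labels and confidence $\delta_0$, $\mathrm{LB}=\widehat{\mathrm{err}}(h)-\gamma$, $\mathrm{UB}=\widehat{\mathrm{err}}(h)+\gamma$ with $\widehat{\mathrm{err}}$ the empirical error on $S''$ and $m=\frac{64}{\gamma^2}(2V_H\ln\frac{12}\gamma+\ln\frac4{\delta_0})$. Algorithm (constants $c_1,b_1,c_2,b_2$): $\delta'=\delta/(2\log_2(2n))$, $H_0=H$, $r_0=1$, $i=0$. While $|H_i|>1$: draw a uniformly random $S_i\subseteq\mathrm{DIS}(H_i)$ of size $c_1\theta^2(V_H\ln\theta+\ln\frac1{\delta'})+b_1$, query labels; $\beta=\min_{h\in H_i}\mathrm{UB}(S_i,h,\delta')$; $H_{i+1}=\{h\in H_i:\mathrm{LB}(S_i,h,\delta')\le\beta\}$; $r_{i+1}=\mathrm{radius}(H_{i+1})$;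 if $r_{i+1}>r_i/2$, draw a uniformly random $S'\subseteq\mathrm{DIS}(H_i)$ of size $\frac{c_2\theta^2}{\epsilon^2}(V_H\ln\frac\theta\epsilon+\ln\frac1\delta)+b_2$ and return $\arg\min_{h\in H_i}\mathrm{UB}(S',h,\delta/2)$; else $i\leftarrow i+1$. Finally return the remaining classifier. *)

theory Defs
  imports Complex_Main
begin

text \<open>Classifiers are identified with their labelings of the finite data set S
  (functions 'a => bool that are False outside S). y is the true labeling.\<close>

definition dist_S :: "'a set \<Rightarrow> ('a \<Rightarrow> bool) \<Rightarrow> ('a \<Rightarrow> bool) \<Rightarrow> real" where
  "dist_S S h h' = real (card {x\<in>S. h x \<noteq> h' x}) / real (card S)"

definition ballH :: "'a set \<Rightarrow> ('a \<Rightarrow> bool) set \<Rightarrow> ('a \<Rightarrow> bool) \<Rightarrow> real \<Rightarrow> ('a \<Rightarrow> bool) set" where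
  "ballH S H h r = {h'\<in>H. dist_S S h h' \<le> r}"

definition DIS :: "'a set \<Rightarrow> ('a \<Rightarrow> bool) set \<Rightarrow> 'a set" where
  "DIS S V = {x\<in>S. \<exists>h1\<in>V. \<exists>h2\<in>V. h1 x \<noteq> h2 x}"

definition radius :: "'a set \<Rightarrow> ('a \<Rightarrow> bool) set \<Rightarrow> real" where
  "radius S V = (LEAST r. \<exists>h'\<in>V. V \<subseteq> ballH S V h' r)"

definition emp_err :: "'a set \<Rightarrow> ('a \<Rightarrow> bool) \<Rightarrow> ('a \<Rightarrow> bool) \<Rightarrow> real" where
  "emp_err T y h = (if T = {} then 0 else real (card {x\<in>T. h x \<noteq> y x}) / real (card T))"

definition LB :: "'a set \<Rightarrow> ('a \<Rightarrow> bool) \<Rightarrow> real \<Rightarrow> ('a \<Rightarrow> bool) \<Rightarrow> real" where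
  "LB T y \<gamma> h = emp_err T y h - \<gamma>"

definition UB :: "'a set \<Rightarrow> ('a \<Rightarrow> bool) \<Rightarrow> real \<Rightarrow> ('a \<Rightarrow> bool) \<Rightarrow> real" where
  "UB T y \<gamma> h = emp_err T y h + \<gamma>"

text \<open>Version spaces H_i of the main loop, for a given outcome of the random samples
  T i (the sample S_i drawn in iteration i) and confidence widths g i (the gamma
  used by LB/UB in iteration i).\<close>
primrec Hseq :: "('a \<Rightarrow> bool) set \<Rightarrow> ('a \<Rightarrow> bool) \<Rightarrow> (nat \<Rightarrow> 'a set) \<Rightarrow> (nat \<Rightarrow> real)
                   \<Rightarrow> nat \<Rightarrow> ('a \<Rightarrow> bool) set" where
  "Hseq H y T g 0 = H"
| "Hseq H y T g (Suc i) =
     (let V = Hseq H y T g i;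
          \<beta> = Min (UB (T i) y (g i) ` V)
      in {h\<in>V. LB (T i) y (g i) h \<le> \<beta>})"

definition rseq :: "'a set \<Rightarrow> ('a \<Rightarrow> bool) set \<Rightarrow> ('a \<Rightarrow> bool) \<Rightarrow> (nat \<Rightarrow> 'a set) \<Rightarrow> (nat \<Rightarrow> real)
                     \<Rightarrow> nat \<Rightarrow> real" where
  "rseq S H y T g i = (if i = 0 then 1 else radius S (Hseq H y T g i))"

text \<open>Iteration i of the main loop is executed iff the loop condition |H_i| > 1 holds
  and no earlier iteration j < i terminated (neither by |H_j| \<le> 1 nor by the early
  return r_{j+1} > r_j / 2).\<close>
definition loop_executed :: "'a set \<Rightarrow> ('a \<Rightarrow> bool) set \<Rightarrow> ('a \<Rightarrow> bool) \<Rightarrow> (nat \<Rightarrow> 'a set)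
                              \<Rightarrow> (nat \<Rightarrow> real) \<Rightarrow> nat \<Rightarrow> bool" where
  "loop_executed S H y T g i \<longleftrightarrow>
     card (Hseq H y T g i) > 1 \<and>
     (\<forall>j<i. card (Hseq H y T g j) > 1 \<and> rseq S H y T g (Suc j) \<le> rseq S H y T g j / 2)"

end

theory Submission
  imports Defs
begin

lemma radius_lb:
  fixes S :: "'a set" and V :: "('a \<Rightarrow> bool) set"
  assumes fin: "finite S" and ne: "S \<noteq> {}"
    and out: "\<forall>h\<in>V. \<forall>x. x \<notin> S \<longrightarrow> \<not> h x"
    and cV: "card V > 1"
  shows "radius S V \<ge> 1 / real (card S)"
proof -
  have finV: "finite V" and neV: "V \<noteq> {}" using cV by (auto intro: ccontr)
  define f where "f h' = Max (dist_S S h' ` V)" for h'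
  have "Min (f ` V) \<in> f ` V" using finV neV by simp
  then obtain h0 where h0V: "h0 \<in> V" and fh0: "f h0 = Min (f ` V)" by force
  have h0: "h0 \<in> V" "\<forall>h'\<in>V. f h0 \<le> f h'"
    using h0V fh0 finV by auto
  let ?P = "\<lambda>r. \<exists>h'\<in>V. V \<subseteq> ballH S V h' r"
  have Pf: "?P (f h0)"
  proof (rule bexI[of _ h0])
    show "V \<subseteq> ballH S V h0 (f h0)"
      using finV by (auto simp: ballH_def f_def)
  qed (rule h0(1))
  have least: "f h0 \<le> r" if "?P r" for r
  proof -
    from that obtain h' where h': "h' \<in> V" "V \<subseteq> ballH S V h' r" by blast
    have "f h' \<le> r" unfolding f_def using h' finV neV
      by (subst Max_le_iff) (auto simp: ballH_def)
    with h0 h' show ?thesis by force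
  qed
  have key: "1 / real (card S) \<le> r" if "?P r" for r
  proof -
    from that obtain h' where h': "h' \<in> V" "V \<subseteq> ballH S V h' r" by blast
    obtain h where h: "h \<in> V" "h \<noteq> h'"
    proof -
      have "\<not> card V \<le> Suc 0" using cV by simp
      then show ?thesis using that h'(1) by (auto simp: card_le_Suc0_iff_eq[OF finV])
    qed
    then obtain x where x: "h x \<noteq> h' x" by blast
    have xS: "x \<in> S" using out h h'(1) x by blast
    have "{x\<in>S. h' x \<noteq> h x} \<noteq> {}" using x xS by auto
    then have c: "card {x\<in>S. h' x \<noteq> h x} \<ge> 1" using fin
      by (simp add: Suc_le_eq card_gt_0_iff)
    have "dist_S S h' h \<le> r" using h h' by (auto simp: ballH_def)
    moreover have "1 / real (card S) \<le> dist_S S h' h"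
      unfolding dist_S_def using c
      by (simp add: divide_right_mono)
    ultimately show ?thesis by linarith
  qed
  show ?thesis unfolding radius_def
    by (rule LeastI2_order[of ?P "f h0"]) (use Pf least key in auto)
qed

lemma Hseq_sub: "Hseq H y T g k \<subseteq> H"
  by (induction k) (auto simp: Let_def)

theorem lemma10:
  fixes S :: "'a set" and H :: "('a \<Rightarrow> bool) set" and y :: "'a \<Rightarrow> bool"
    and T :: "nat \<Rightarrow> 'a set" and g :: "nat \<Rightarrow> real" and i :: nat
  assumes "finite S" and "S \<noteq> {}"
    and "H \<noteq> {}"
    and "\<forall>h\<in>H. \<forall>x. x \<notin> S \<longrightarrow> \<not> h x"
    and "\<forall>x. x \<notin> S \<longrightarrow> \<not> y x"
    and "\<forall>j. T j \<subseteq> DIS S (Hseq H y T g j)"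
    and "\<forall>j. g j \<ge> 0"
    and "loop_executed S H y T g i"
  shows "real (Suc i) \<le> log 2 (2 * real (card S))"
proof -
  have le: "\<forall>j<i. rseq S H y T g (Suc j) \<le> rseq S H y T g j / 2"
    and ci: "card (Hseq H y T g i) > 1"
    using assms(8) by (auto simp: loop_executed_def)
  have rk: "k \<le> i \<Longrightarrow> rseq S H y T g k \<le> 1 / 2 ^ k" for k
  proof (induction k)
    case 0 then show ?case by (simp add: rseq_def)
  next
    case (Suc k)
    then have "rseq S H y T g (Suc k) \<le> rseq S H y T g k / 2" using le by auto
    also have "\<dots> \<le> (1 / 2 ^ k) / 2" using Suc by auto
    finally show ?case by simp
  qed
  have n1: "card S \<ge> 1" using assms(1,2) by (simp add: Suc_leI card_gt_0_iff)
  have p: "2 ^ i \<le> card S"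
  proof (cases i)
    case 0 then show ?thesis using n1 by simp
  next
    case (Suc k)
    have "rseq S H y T g i = radius S (Hseq H y T g i)" using Suc by (simp add: rseq_def)
    moreover have "radius S (Hseq H y T g i) \<ge> 1 / real (card S)"
      apply (rule radius_lb[OF assms(1,2) _ ci])
      using assms(4) Hseq_sub by blast
    ultimately have "1 / real (card S) \<le> 1 / 2 ^ i" using rk[of i] by simp
    then have "real (2 ^ i) \<le> real (card S)" using n1
      by (simp add: divide_le_cancel frac_le_eq field_simps)
    then show ?thesis by linarith
  qed
  have "2 ^ Suc i \<le> 2 * card S" using p by simp
  from le_log2_of_power[OF this] show ?thesis by simp
qed

end
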